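(* Let $X\subseteq\mathbb{R}^m$, $f=(f_1,\dots,f_d):X\to\mathbb{R}^d$ with $a_{i0}\le f_i(x)\le a_{in}$ for all $x\in X$, $i\in[d]$, and $\phi:\mathbb{R}^d\to\mathbb{R}$. Let $u:X\to\mathbb{R}^{d\times(n+1)}$ be a vector of convex functions such that for every $x\in X$ and $i\in[d]$: $u_{i0}(x)=a_{i0}$, $u_{in}(x)=f_i(x)$, and $u_{ij}(x)\le\min\{f_i(x),a_{ij}\}$ for $j\in[n-1]$. Let $W$ be a convex set containing $\{(x,s_{\cdot n})\mid s_{\cdot n}=f(x),\ x\in X\}$. Then $$\{(x,\mu)\mid \mu\le\phi(f(x)),\ x\in X\}\subseteq \operatorname{proj}_{(x,\mu)}\Bigl\{(x,\mu,s,\delta)\ \Bigm|\ \mu\le\operatorname{conc}_Q(\bar\phi)(s),\ (Z(s),\delta)\text{ satisfies (Inc-1)},\ u(x)\le s,\ (x,s_{\cdot n})\in W\Bigr\},$$ i.e. the right-hand set is an MICP relaxation of the hypograph of $\phi\circ f$.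
   Context: Let $d,n$ be positive integers, $[k]=\{1,\dots,k\}$. Let $a\in\mathbb{R}^{d\times(n+1)}$ with $a_{i0}<\dots<a_{in}$ for each $i$. For each $i$ let $0=\tau(i,0)<\tau(i,1)<\dots<\tau(i,l_i)=n$ be integers ($l_i\ge1$). Let $\Delta_i=\{z_i\in\mathbb{R}^{n+1}\mid1=z_{i0}\ge z_{i1}\ge\dots\ge z_{in}\ge0\}$. The system (Inc-1) in $(z,\delta)$, $\delta=(\delta_{it})_{i\in[d],t\in[l_i-1]}$: $z_i\in\Delta_i$, $\delta_{it}\in\{0,1\}$, $z_{i\tau(i,t)}\ge\delta_{it}\ge z_{i\tau(i,t)+1}$. For $s\in\mathbb{R}^{d\times(n+1)}$, $s_{\cdot n}=(s_{1n},\dots,s_{dn})$, and $Z(s)=(Z_1(s_1),\dots,Z_d(s_d))$ where $Z_i(s_i)=z_i$ with $z_{i0}=1$ and $z_{ij}=(s_{ij}-s_{i,j-1})/(a_{ij}-a_{i,j-1})$ for $j\in[n]$. Let $v_{ij}\in\mathbb{R}^{n+1}$ have $k$-th component $a_{i,\min\{k,j\}}$ ($k=0,\dots,n$), i.e. $v_{ij}=(a_{i0},\dots,a_{i,j-1},a_{ij},\dots,a_{ij})$; $Q_i=\operatorname{conv}\{v_{i0},\dots,v_{in}\}$, $Q=Q_1\times\dots\times Q_d$, and $\bar\phi:Q\to\mathbb{R}$, $\bar\phi(s)=\phi(s_{1n},\dots,s_{dn})$. $\operatorname{conc}_Q(\bar\phi)$ is the concave envelope of $\bar\phi$ over $Q$.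 *)

theory Defs
  imports "HOL-Analysis.Analysis"
begin

text \<open>Row i of a point of R^(d x (n+1)) is represented as a function nat => real,
  using indices j = 0..n; points of R^(d x (n+1)) are functions 'd => nat => real
  whose components with j > n are zero.\<close>

definition vpt :: "('d \<Rightarrow> nat \<Rightarrow> real) \<Rightarrow> nat \<Rightarrow> 'd \<Rightarrow> nat \<Rightarrow> nat \<Rightarrow> real" where
  "vpt a n i j = (\<lambda>k. if k \<le> n then a i (min k j) else 0)"

definition Qi :: "('d \<Rightarrow> nat \<Rightarrow> real) \<Rightarrow> nat \<Rightarrow> 'd \<Rightarrow> (nat \<Rightarrow> real) set" where
  "Qi a n i = {z. \<exists>lam::nat \<Rightarrow> real. (\<forall>j\<le>n. 0 \<le> lam j) \<and> (\<Sum>j\<le>n. lam j) = 1 \<and>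
      z = (\<lambda>k. \<Sum>j\<le>n. lam j * vpt a n i j k)}"

definition Qset :: "('d \<Rightarrow> nat \<Rightarrow> real) \<Rightarrow> nat \<Rightarrow> ('d \<Rightarrow> nat \<Rightarrow> real) set" where
  "Qset a n = {s. \<forall>i. s i \<in> Qi a n i}"

definition concave_on_mat :: "('d \<Rightarrow> nat \<Rightarrow> real) set \<Rightarrow> (('d \<Rightarrow> nat \<Rightarrow> real) \<Rightarrow> real) \<Rightarrow> bool" where
  "concave_on_mat S h \<longleftrightarrow> (\<forall>x\<in>S. \<forall>y\<in>S. \<forall>t::real. 0 \<le> t \<and> t \<le> 1 \<longrightarrow>
      (\<lambda>i j. (1 - t) * x i j + t * y i j) \<in> S \<and>
      (1 - t) * h x + t * h y \<le> h (\<lambda>i j. (1 - t) * x i j + t * y i j))"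

text \<open>Concave envelope over S: pointwise infimum of all concave overestimators on S
  (extended-real valued; +infinity if there is none).\<close>
definition conc :: "('d \<Rightarrow> nat \<Rightarrow> real) set \<Rightarrow> (('d \<Rightarrow> nat \<Rightarrow> real) \<Rightarrow> real)
    \<Rightarrow> ('d \<Rightarrow> nat \<Rightarrow> real) \<Rightarrow> ereal" where
  "conc S g s = (INF h\<in>{h. concave_on_mat S h \<and> (\<forall>t\<in>S. g t \<le> h t)}. ereal (h s))"

definition phibar :: "(real^'d \<Rightarrow> real) \<Rightarrow> nat \<Rightarrow> ('d::finite \<Rightarrow> nat \<Rightarrow> real) \<Rightarrow> real" where
  "phibar phi n s = phi (\<chi> i. s i n)"

definition Zmap :: "('d \<Rightarrow> nat \<Rightarrow> real) \<Rightarrow> ('d \<Rightarrow> nat \<Rightarrow> real) \<Rightarrow> 'd \<Rightarrow> nat \<Rightarrow> real" where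
  "Zmap a s i j = (if j = 0 then 1 else (s i j - s i (j - 1)) / (a i j - a i (j - 1)))"

definition Delta :: "nat \<Rightarrow> (nat \<Rightarrow> real) set" where
  "Delta n = {z. z 0 = 1 \<and> (\<forall>j<n. z j \<ge> z (Suc j)) \<and> z n \<ge> 0}"

definition Inc1 :: "nat \<Rightarrow> ('d \<Rightarrow> nat \<Rightarrow> nat) \<Rightarrow> ('d \<Rightarrow> nat) \<Rightarrow> ('d \<Rightarrow> nat \<Rightarrow> real)
    \<Rightarrow> ('d \<Rightarrow> nat \<Rightarrow> real) \<Rightarrow> bool" where
  "Inc1 n tau l z delta \<longleftrightarrow> (\<forall>i. z i \<in> Delta n) \<and>
     (\<forall>i. \<forall>t\<in>{1..l i - 1}. delta i t \<in> {0, 1} \<and>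
        z i (tau i t) \<ge> delta i t \<and> delta i t \<ge> z i (tau i t + 1))"

end

theory Submission
  imports Defs
begin

lemma mono_row:
  fixes a :: "nat \<Rightarrow> real"
  assumes "\<forall>j<n. a j < a (Suc j)" "p \<le> q" "q \<le> n"
  shows "a p \<le> a q"
  using assms
proof (induction q)
  case 0 then show ?case by simp
next
  case (Suc q)
  show ?case
  proof (cases "p = Suc q")
    case False
    then have "a p \<le> a q" using Suc by simp
    also have "a q < a (Suc q)" using Suc by simp
    finally show ?thesis by simp
  qed simp
qed

lemma strict_to_end:
  fixes g :: "nat \<Rightarrow> nat"
  assumes "\<forall>t<L. g t < g (Suc t)" "t < L"
  shows "g t < g L"
  using assms
proof (induction L)
  case 0 then show ?case by simp
next
  case (Suc L)
  show ?case
  proof (cases "t = L")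
    case False
    then have "g t < g L" using Suc by simp
    also have "g L < g (Suc L)" using Suc by simp
    finally show ?thesis .
  qed (use Suc in simp)
qed

lemma zz_bounds:
  fixes a :: "nat \<Rightarrow> real"
  assumes "a (k - 1) < a k"
  shows "0 \<le> (min (a k) F - min (a (k-1)) F) / (a k - a (k-1))
       \<and> (min (a k) F - min (a (k-1)) F) / (a k - a (k-1)) \<le> 1"
proof -
  have d: "a k - a (k-1) > 0" using assms by simp
  have "0 \<le> min (a k) F - min (a (k-1)) F" using assms by (auto simp: min_def)
  moreover have "min (a k) F - min (a (k-1)) F \<le> a k - a (k-1)" using assms by (auto simp: min_def)
  ultimately show ?thesis using d by (simp add: divide_le_eq_1)
qed

lemma zz_step:
  fixes a :: "nat \<Rightarrow> real"
  assumes "a (k - 1) < a k" "a k < a (Suc k)"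
    and "(min (a (Suc k)) F - min (a k) F) / (a (Suc k) - a k) > 0"
  shows "(min (a k) F - min (a (k-1)) F) / (a k - a (k-1)) = 1"
proof -
  have "min (a (Suc k)) F - min (a k) F > 0"
    using assms(2,3) by (simp add: zero_less_divide_iff)
  then have "F > a k" by (auto simp: min_def split: if_splits)
  then have "min (a k) F = a k" "min (a (k-1)) F = a (k-1)" using assms(1) by auto
  then show ?thesis using assms(1) by simp
qed

lemma sum_delta_mult:
  fixes g :: "nat \<Rightarrow> real"
  shows "(\<Sum>j\<le>n. (if j = c then \<alpha> else 0) * g j) = (if c \<le> n then \<alpha> * g c else 0)"
proof -
  have "(\<Sum>j\<le>n. (if j = c then \<alpha> else 0) * g j) = (\<Sum>j\<le>n. (if j = c then \<alpha> * g j else 0))"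
    by (rule sum.cong) auto
  also have "\<dots> = (if c \<le> n then \<alpha> * g c else 0)" by (simp add: sum.delta')
  finally show ?thesis .
qed

lemma row_in_Q:
  fixes a :: "nat \<Rightarrow> real"
  assumes inc: "\<forall>j<n. a j < a (Suc j)" and F: "a 0 \<le> F" "F \<le> a n"
  shows "\<exists>lam::nat \<Rightarrow> real. (\<forall>j\<le>n. 0 \<le> lam j) \<and> (\<Sum>j\<le>n. lam j) = 1 \<and>
      (\<lambda>k. if k \<le> n then min (a k) F else 0) = (\<lambda>k. \<Sum>j\<le>n. lam j * (if k \<le> n then a (min k j) else 0))"
proof (cases "F = a 0")
  case True
  let ?lam = "\<lambda>j. if j = 0 then 1 else (0::real)"
  have "(\<lambda>k. if k \<le> n then min (a k) F else 0) = (\<lambda>k. \<Sum>j\<le>n. ?lam j * (if k \<le> n then a (min k j) else 0))"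
  proof
    fix k
    show "(if k \<le> n then min (a k) F else 0) = (\<Sum>j\<le>n. ?lam j * (if k \<le> n then a (min k j) else 0))"
      using True mono_row[OF inc, of 0 k] by (auto simp add: sum_delta_mult min_def)
  qed
  then show ?thesis by (intro exI[of _ ?lam]) auto
next
  case False
  define j where "j = (LEAST j. F \<le> a j)"
  have Fj: "F \<le> a j" unfolding j_def by (rule LeastI[of _ n]) (use F in simp)
  have jn: "j \<le> n" unfolding j_def by (rule Least_le) (use F in simp)
  have j0: "j \<ge> 1" using Fj F False by (cases j) auto
  have Fj1: "a (j-1) < F"
  proof (rule ccontr)
    assume "\<not> a (j-1) < F"
    then have "F \<le> a (j-1)" by simp
    then have "j \<le> j - 1" unfolding j_def by (rule Least_le)
    then show False using j0 by simp
  qed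
  have ajj: "a (j-1) < a j" using inc jn j0 by (metis Suc_diff_1 diff_less less_le_trans zero_less_one le_less_trans less_imp_le_nat) 
  define al where "al = (a j - F) / (a j - a (j-1))"
  define be where "be = (F - a (j-1)) / (a j - a (j-1))"
  have al0: "al \<ge> 0" "be \<ge> 0" using Fj Fj1 ajj unfolding al_def be_def by auto
  have dne: "a j - a (j-1) \<noteq> 0" using ajj by simp
  have sum1: "al + be = 1" using dne unfolding al_def be_def by (simp add: divide_simps)
  have comb: "al * a (j-1) + be * a j = F" using dne unfolding al_def be_def by (simp add: divide_simps) (simp add: algebra_simps)
  let ?lam = "\<lambda>i. (if i = j - 1 then al else 0) + (if i = j then be else 0)"
  have jj: "j - 1 \<noteq> j" using j0 by simp
  have "(\<Sum>i\<le>n. ?lam i) = al + be" using jn by (simp add: sum.distrib)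
  moreover have "(\<lambda>k. if k \<le> n then min (a k) F else 0) = (\<lambda>k. \<Sum>i\<le>n. ?lam i * (if k \<le> n then a (min k i) else 0))"
  proof
    fix k
    have "(\<Sum>i\<le>n. ?lam i * (if k \<le> n then a (min k i) else 0))
        = al * (if k \<le> n then a (min k (j-1)) else 0) + be * (if k \<le> n then a (min k j) else 0)"
      using jn j0 by (simp only: distrib_right sum.distrib sum_delta_mult) simp
    also have "\<dots> = (if k \<le> n then min (a k) F else 0)"
    proof (cases "k \<le> n")
      case True
      show ?thesis
      proof (cases "k \<le> j - 1")
        case True
        have "a k \<le> a (j-1)" using mono_row[OF inc True] jn by simp
        then have "min (a k) F = a k" using Fj1 by simp
        moreover have "min k (j-1) = k" "min k j = k" using True j0 by auto
        ultimately show ?thesis using `k \<le> n` sum1 by (simp add: distrib_right[symmetric])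
      next
        case False
        then have kj: "j \<le> k" by simp
        have "a j \<le> a k" using mono_row[OF inc kj] `k \<le> n` by simp
        then have "min (a k) F = F" using Fj by simp
        moreover have "min k (j-1) = j-1" "min k j = j" using kj by auto
        ultimately show ?thesis using `k \<le> n` comb by simp
      qed
    qed simp
    finally show "(if k \<le> n then min (a k) F else 0) = (\<Sum>i\<le>n. ?lam i * (if k \<le> n then a (min k i) else 0))" by simp
  qed
  ultimately show ?thesis using sum1 al0 by (intro exI[of _ ?lam]) auto
qed

theorem theorem4p1:
  fixes n :: nat
    and a :: "'d::finite \<Rightarrow> nat \<Rightarrow> real"
    and tau :: "'d \<Rightarrow> nat \<Rightarrow> nat" and l :: "'d \<Rightarrow> nat"
    and X :: "(real^'m) set"
    and f :: "real^'m \<Rightarrow> real^'d"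
    and phi :: "real^'d \<Rightarrow> real"
    and u :: "'d \<Rightarrow> nat \<Rightarrow> real^'m \<Rightarrow> real"
    and W :: "((real^'m) \<times> (real^'d)) set"
  assumes n_pos: "n \<ge> 1"
    and a_incr: "\<forall>i. \<forall>j<n. a i j < a i (Suc j)"
    and l_pos: "\<forall>i. l i \<ge> 1"
    and tau_0: "\<forall>i. tau i 0 = 0"
    and tau_l: "\<forall>i. tau i (l i) = n"
    and tau_incr: "\<forall>i. \<forall>t<l i. tau i t < tau i (Suc t)"
    and f_bounds: "\<forall>x\<in>X. \<forall>i. a i 0 \<le> f x $ i \<and> f x $ i \<le> a i n"
    and u_convex: "\<forall>i. \<forall>j\<le>n. convex_on (convex hull X) (u i j)"
    and u_0: "\<forall>x\<in>X. \<forall>i. u i 0 x = a i 0"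
    and u_n: "\<forall>x\<in>X. \<forall>i. u i n x = f x $ i"
    and u_mid: "\<forall>x\<in>X. \<forall>i. \<forall>j\<in>{1..n-1}. u i j x \<le> min (f x $ i) (a i j)"
    and W_convex: "convex W"
    and W_contains: "{(x, f x) | x. x \<in> X} \<subseteq> W"
  shows "{(x, \<mu>). x \<in> X \<and> \<mu> \<le> phi (f x)} \<subseteq>
    (\<lambda>(x, \<mu>, s, \<delta>). (x, \<mu>)) `
      {(x, \<mu>, s, \<delta>). ereal \<mu> \<le> conc (Qset a n) (phibar phi n) s
         \<and> Inc1 n tau l (Zmap a s) \<delta>
         \<and> (\<forall>i. \<forall>j\<le>n. u i j x \<le> s i j)
         \<and> (x, \<chi> i. s i n) \<in> W}"
proof
  fix p assume "p \<in> {(x, \<mu>). x \<in> X \<and> \<mu> \<le> phi (f x)}"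
  then obtain x \<mu> where p: "p = (x, \<mu>)" and xX: "x \<in> X" and mu: "\<mu> \<le> phi (f x)" by auto
  define s where "s = (\<lambda>i k. if k \<le> n then min (a i k) (f x $ i) else 0)"
  define \<delta> where "\<delta> = (\<lambda>i t. if Zmap a s i (tau i t + 1) > 0 then 1 else (0::real))"
  have sn: "(\<chi> i. s i n) = f x" using f_bounds xX by (simp add: s_def vec_eq_iff)
  have sQ: "s \<in> Qset a n"
    unfolding Qset_def
  proof (intro CollectI allI)
    fix i
    have "a i 0 \<le> f x $ i" "f x $ i \<le> a i n" using f_bounds xX by auto
    moreover have "\<forall>j<n. a i j < a i (Suc j)" using a_incr by blast
    ultimately obtain lam :: "nat \<Rightarrow> real" where "(\<forall>j\<le>n. 0 \<le> lam j)" "(\<Sum>j\<le>n. lam j) = 1"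
      "(\<lambda>k. if k \<le> n then min (a i k) (f x $ i) else 0) = (\<lambda>k. \<Sum>j\<le>n. lam j * (if k \<le> n then a i (min k j) else 0))"
      using row_in_Q[of n "a i" "f x $ i"] by blast
    then show "s i \<in> Qi a n i" unfolding Qi_def vpt_def s_def by blast
  qed
  have conc: "ereal \<mu> \<le> conc (Qset a n) (phibar phi n) s"
    unfolding conc_def
  proof (rule INF_greatest)
    fix h assume "h \<in> {h. concave_on_mat (Qset a n) h \<and> (\<forall>t\<in>Qset a n. phibar phi n t \<le> h t)}"
    then have "phibar phi n s \<le> h s" using sQ by auto
    then show "ereal \<mu> \<le> ereal (h s)" using mu sn by (simp add: phibar_def)
  qed
  have sk: "s i k = min (a i k) (f x $ i)" if "k \<le> n" for i k using that by (simp add: s_def)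
  have aik: "a i (k - 1) < a i k" if "1 \<le> k" "k \<le> n" for i k
    proof -
    have "k - 1 < n" "Suc (k - 1) = k" using that by auto
    then show ?thesis using a_incr by metis
  qed
  have Zb: "0 \<le> Zmap a s i k \<and> Zmap a s i k \<le> 1" if "k \<le> n" for i k
  proof (cases "k = 0")
    case False
    have e: "Zmap a s i k = (min (a i k) (f x $ i) - min (a i (k-1)) (f x $ i)) / (a i k - a i (k-1))"
      unfolding Zmap_def using False that sk[of k i] sk[of "k-1" i] by simp
    have "1 \<le> k" using False by simp
    from zz_bounds[of "a i" k "f x $ i", OF aik[OF this that]] show ?thesis unfolding e .
  qed (simp add: Zmap_def)
  have Zs: "Zmap a s i k = 1" if "Suc k \<le> n" "Zmap a s i (Suc k) > 0" for i k
  proof (cases "k = 0")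
    case False
    have e: "Zmap a s i k = (min (a i k) (f x $ i) - min (a i (k-1)) (f x $ i)) / (a i k - a i (k-1))"
      unfolding Zmap_def using False that sk[of k i] sk[of "k-1" i] by simp
    have e2: "Zmap a s i (Suc k) = (min (a i (Suc k)) (f x $ i) - min (a i k) (f x $ i)) / (a i (Suc k) - a i k)"
      unfolding Zmap_def using that sk[of k i] sk[of "Suc k" i] by simp
    have "1 \<le> k" "k \<le> n" using False that by auto
    have "a i k < a i (Suc k)" using aik[of "Suc k" i] that by simp
    from zz_step[of "a i" k "f x $ i", OF aik[OF \<open>1 \<le> k\<close> \<open>k \<le> n\<close>] this] that(2) show ?thesis unfolding e e2 by simp
  qed (simp add: Zmap_def)
  have tl: "tau i t < n" if "t < l i" for i t
    using strict_to_end[of "l i" "tau i" t] tau_incr tau_l that by simp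
  have inc1: "Inc1 n tau l (Zmap a s) \<delta>"
    unfolding Inc1_def
  proof (intro conjI allI ballI)
    fix i
    show "Zmap a s i \<in> Delta n"
      unfolding Delta_def
    proof (intro CollectI conjI allI impI)
      show "Zmap a s i 0 = 1" by (simp add: Zmap_def)
      show "0 \<le> Zmap a s i n" using Zb by simp
      fix j assume "j < n"
      then show "Zmap a s i (Suc j) \<le> Zmap a s i j"
        using Zb[of j i] Zb[of "Suc j" i] Zs[of j i] by (cases "Zmap a s i (Suc j) > 0") auto
    qed
  next
    fix i t assume t: "t \<in> {1..l i - 1}"
    then have "t < l i" using l_pos by auto
    then have tn: "Suc (tau i t) \<le> n" using tl by (simp add: Suc_le_eq)
    show "\<delta> i t \<in> {0, 1}" by (simp add: \<delta>_def)
    show "\<delta> i t \<le> Zmap a s i (tau i t)"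
      using Zb[of "tau i t" i] Zs[of "tau i t" i] tn by (simp add: \<delta>_def)
    show "Zmap a s i (tau i t + 1) \<le> \<delta> i t"
      using Zb[of "Suc (tau i t)" i] tn by (simp add: \<delta>_def)
  qed
  have us: "\<forall>i. \<forall>j\<le>n. u i j x \<le> s i j"
  proof (intro allI impI)
    fix i j assume jn: "j \<le> n"
    show "u i j x \<le> s i j"
    proof (cases "j = 0")
      case True then show ?thesis using u_0 xX f_bounds by (simp add: s_def)
    next
      case j0: False
      show ?thesis
      proof (cases "j = n")
        case True then show ?thesis using u_n xX f_bounds by (simp add: s_def)
      next
        case False
        then have "j \<in> {1..n-1}" using j0 jn by auto
        then show ?thesis using u_mid xX jn by (simp add: s_def)
      qed
    qed
  qed
  have "(x, \<mu>, s, \<delta>) \<in> {(x, \<mu>, s, \<delta>). ereal \<mu> \<le> conc (Qset a n) (phibar phi n) s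
         \<and> Inc1 n tau l (Zmap a s) \<delta>
         \<and> (\<forall>i. \<forall>j\<le>n. u i j x \<le> s i j)
         \<and> (x, \<chi> i. s i n) \<in> W}"
  proof -
    have "(x, f x) \<in> W" using W_contains xX by blast
    then have "(x, \<chi> i. s i n) \<in> W" unfolding sn .
    then show ?thesis using conc inc1 us by simp
  qed
  then show "p \<in> (\<lambda>(x, \<mu>, s, \<delta>). (x, \<mu>)) ` {(x, \<mu>, s, \<delta>). ereal \<mu> \<le> conc (Qset a n) (phibar phi n) s
         \<and> Inc1 n tau l (Zmap a s) \<delta>
         \<and> (\<forall>i. \<forall>j\<le>n. u i j x \<le> s i j)
         \<and> (x, \<chi> i. s i n) \<in> W}"
    unfolding p by (rule rev_image_eqI) simp
qed

end
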